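(* For every $n\geq 0$, $$S_1(n)=10^{n},\qquad S_2(n)=\frac{35\cdot 36^{n}-2\cdot 3^{n}}{33},\qquad S_3(n)=\frac{25\cdot 136^{n}-4\cdot 10^{n}}{21}.$$
   Context: The Stern polynomials $B_n(t)\in\mathbb{Z}[t]$ are defined by $B_0(t)=0$, $B_1(t)=1$, and for $n\geq 1$: $B_{2n}(t)=tB_n(t)$, $B_{2n+1}(t)=B_n(t)+B_{n+1}(t)$. For $n\geq1$ let $e(n)=\deg B_n(t)$. For $k,n\geq 0$ let $S_k(n)=\sum_{a\geq 1:\;e(a)=n}a^{k}$ (a finite sum over the positive integers $a$ with $e(a)=n$). *)

theory Defs
  imports "HOL-Computational_Algebra.Polynomial"
begin

function stern_poly :: "nat \<Rightarrow> int poly" where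
  "stern_poly n =
     (if n = 0 then 0
      else if n = 1 then 1
      else if even n then monom 1 1 * stern_poly (n div 2)
      else stern_poly (n div 2) + stern_poly (n div 2 + 1))"
  by auto
termination
  by (relation "measure id") (auto elim!: oddE)

definition stern_e :: "nat \<Rightarrow> nat" where
  "stern_e a = degree (stern_poly a)"

definition stern_S :: "nat \<Rightarrow> nat \<Rightarrow> nat" where
  "stern_S k n = (\<Sum>a\<in>{a. a \<ge> 1 \<and> stern_e a = n}. a ^ k)"

end

theory Submission
  imports Defs
begin

declare stern_poly.simps [simp del]

lemma sp0: "stern_poly 0 = 0" by (subst stern_poly.simps) simp
lemma sp1: "stern_poly 1 = 1" by (subst stern_poly.simps) simp
lemma sp1': "stern_poly (Suc 0) = 1" by (subst stern_poly.simps) simp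
lemma sp_even: "n \<ge> 1 \<Longrightarrow> stern_poly (2*n) = monom 1 1 * stern_poly n"
  by (subst stern_poly.simps) simp
lemma sp_odd: "n \<ge> 1 \<Longrightarrow> stern_poly (2*n+1) = stern_poly n + stern_poly (n+1)"
  by (subst stern_poly.simps) simp

lemma sp_pos: "(\<forall>i. coeff (stern_poly n) i \<ge> 0) \<and> (n \<ge> 1 \<longrightarrow> stern_poly n \<noteq> 0)"
proof (induction n rule: less_induct)
  case (less n)
  consider "n = 0" | "n = 1" | m where "m \<ge> 1" "n = 2*m" | m where "m \<ge> 1" "n = 2*m+1"
    by (metis One_nat_def add_0 less_one mult_2 nat_le_linear not_less_eq_eq oddE evenE
        not_less mult_0_right)
  then show ?case
  proof cases
    case 1 then show ?thesis by (simp add: sp0)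
  next
    case 2 then show ?thesis by (simp add: sp1' coeff_1)
  next
    case 3
    with less[of m] have h: "(\<forall>i. coeff (stern_poly m) i \<ge> 0) \<and> stern_poly m \<noteq> 0" by auto
    show ?thesis using 3 h by (auto simp: sp_even coeff_monom_mult)
  next
    case 4
    with less[of m] less[of "m+1"] have h: "(\<forall>i. coeff (stern_poly m) i \<ge> 0) \<and> stern_poly m \<noteq> 0"
      "(\<forall>i. coeff (stern_poly (m+1)) i \<ge> 0)" by auto
    have e: "stern_poly n = stern_poly m + stern_poly (m+1)" using 4 sp_odd by simp
    have "lead_coeff (stern_poly m) > 0" using h by (smt (verit) leading_coeff_0_iff)
    then have "coeff (stern_poly n) (degree (stern_poly m)) > 0"
      using h unfolding e coeff_add by (smt (verit))
    then have "stern_poly n \<noteq> 0" by auto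
    then show ?thesis using h by (auto simp only: e coeff_add intro: add_nonneg_nonneg)
  qed
qed

lemma deg_add_nonneg:
  fixes p q :: "int poly"
  assumes "\<forall>i. coeff p i \<ge> 0" "\<forall>i. coeff q i \<ge> 0"
  shows "degree (p + q) = max (degree p) (degree q)"
proof -
  have a: "degree p \<le> degree (p+q)" if "\<forall>i. coeff p i \<ge> 0" "\<forall>i. coeff q i \<ge> 0" for p q :: "int poly"
  proof (cases "p = 0")
    case False
    then have "lead_coeff p > 0" using that by (smt (verit) leading_coeff_0_iff)
    then have "coeff (p+q) (degree p) \<noteq> 0" using that(2)
      by (smt (verit) coeff_add)
    then show ?thesis by (rule le_degree)
  qed simp
  show ?thesis using a[OF assms] a[OF assms(2,1)]
    by (simp add: add.commute degree_add_le le_antisym)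
qed

lemma e_even: "n \<ge> 1 \<Longrightarrow> stern_e (2*n) = stern_e n + 1"
  using sp_pos[of n] by (simp add: stern_e_def sp_even degree_mult_eq degree_monom_eq)

lemma e_odd: "n \<ge> 1 \<Longrightarrow> stern_e (2*n+1) = max (stern_e n) (stern_e (n+1))"
  using sp_pos[of n] sp_pos[of "n+1"] using sp_odd[of n] deg_add_nonneg[of "stern_poly n" "stern_poly (n+1)"] by (simp add: stern_e_def)

lemma e0: "stern_e 0 = 0" by (simp add: stern_e_def sp0)
lemma e1: "stern_e 1 = 0" by (simp add: stern_e_def sp1')

lemma e_step: "stern_e (Suc m) \<le> stern_e m + 1 \<and> stern_e m \<le> stern_e (Suc m) + 1"
proof (induction m rule: less_induct)
  case (less m)
  consider "m = 0" | k where "k \<ge> 1" "m = 2*k" | k where "m = 2*k+1"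
    by (metis One_nat_def evenE le_add1 mult_0_right neq0_conv oddE less_one not_less)
  then show ?case
  proof cases
    case 1 then show ?thesis using e1 by (simp add: e0)
  next
    case 2
    have "Suc m = 2*k+1" using 2 by simp
    then show ?thesis using 2 e_odd[of k] e_even[of k] less[of k] by auto
  next
    case 3
    show ?thesis
    proof (cases "k = 0")
      case True
      then show ?thesis using 3 e_even[of 1] e1 by (simp add: numeral_2_eq_2)
    next
      case False
      have "Suc m = 2*(k+1)" using 3 by simp
      moreover have "k < m" using 3 False by simp
      ultimately show ?thesis using 3 False e_odd[of k] e_even[of "k+1"] less[of k] by auto
    qed
  qed
qed

lemma e_4p1: "a \<ge> 1 \<Longrightarrow> stern_e (4*a+1) = stern_e a + 1"
proof -
  assume a: "a \<ge> 1"
  have "4*a+1 = 2*(2*a)+1" by simp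
  then have "stern_e (4*a+1) = max (stern_e (2*a)) (stern_e (2*a+1))"
    using e_odd[of "2*a"] a by simp
  then show ?thesis using e_even[OF a] e_odd[OF a] e_step[of a] by auto
qed

lemma e_4m1: "a \<ge> 1 \<Longrightarrow> stern_e (4*a-1) = stern_e a + 1"
proof -
  assume a: "a \<ge> 1"
  then obtain b where b: "a = b + 1" by (metis add.commute le_Suc_ex Suc_eq_plus1_left)
  have "4*a-1 = 2*(2*b+1)+1" using b by simp
  then have "stern_e (4*a-1) = stern_e (2*(2*b+1)+1)" by (rule arg_cong)
  also have "\<dots> = max (stern_e (2*b+1)) (stern_e (2*b+1+1))" by (rule e_odd) simp
  also have "2*b+1+1 = 2*a" using b by simp
  finally have "stern_e (4*a-1) = max (stern_e (2*b+1)) (stern_e (2*a))" .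
  moreover have "stern_e (2*b+1) \<le> stern_e a + 1"
  proof (cases "b = 0")
    case True then show ?thesis using b by (simp add: e1)
  next
    case False
    then show ?thesis using e_odd[of b] b e_step[of b] by auto
  qed
  ultimately show ?thesis using e_even[OF a] by auto
qed

definition AA :: "nat \<Rightarrow> nat set" where "AA n = {a. a \<ge> 1 \<and> stern_e a = n}"

lemma split4: "(a::nat) \<ge> 2 \<Longrightarrow> (\<exists>b\<ge>1. a = 2*b) \<or> (\<exists>b\<ge>1. a = 4*b+1) \<or> (\<exists>b\<ge>1. a = 4*b-1)"
proof -
  assume a: "a \<ge> 2"
  have "a mod 4 = 0 \<or> a mod 4 = 1 \<or> a mod 4 = 2 \<or> a mod 4 = 3" by arith
  then show ?thesis
  proof (elim disjE)
    assume "a mod 4 = 0" then show ?thesis using a by (intro disjI1 exI[of _ "a div 2"]) presburger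
  next
    assume "a mod 4 = 2" then show ?thesis using a by (intro disjI1 exI[of _ "a div 2"]) presburger
  next
    assume "a mod 4 = 1" then show ?thesis using a by (intro disjI2 disjI1 exI[of _ "a div 4"]) presburger
  next
    assume "a mod 4 = 3" then show ?thesis using a by (intro disjI2 disjI2 exI[of _ "a div 4 + 1"]) presburger
  qed
qed

lemma e_pos: "a \<ge> 2 \<Longrightarrow> \<exists>b\<ge>1. b < a \<and> stern_e a = stern_e b + 1 \<and>
   (a = 2*b \<or> a = 4*b+1 \<or> a = 4*b-1)"
  using split4[of a] e_even e_4p1 e_4m1 by fastforce

lemma AA0: "AA 0 = {1}"
proof -
  have "a = 1" if "a \<ge> 1" "stern_e a = 0" for a
  proof (rule ccontr)
    assume "a \<noteq> 1"
    then have "a \<ge> 2" using that by simp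
    then show False using e_pos[of a] that by auto
  qed
  then show ?thesis using e1 unfolding AA_def by auto
qed

lemma ne1: "b \<ge> 1 \<Longrightarrow> 2*a \<noteq> 4*b-(1::nat)" by presburger
lemma ne2: "2*a \<noteq> 4*b+(1::nat)" by presburger
lemma ne3: "a \<ge> 1 \<Longrightarrow> 4*a-1 \<noteq> 4*b+(1::nat)" by presburger

lemma AA_Suc: "AA (Suc n) = (\<lambda>a. 2*a)`AA n \<union> (\<lambda>a. 4*a-1)`AA n \<union> (\<lambda>a. 4*a+1)`AA n"
proof
  show "AA (Suc n) \<subseteq> (\<lambda>a. 2*a)`AA n \<union> (\<lambda>a. 4*a-1)`AA n \<union> (\<lambda>a. 4*a+1)`AA n"
  proof
    fix a assume "a \<in> AA (Suc n)"
    then have a: "a \<ge> 1" "stern_e a = Suc n" by (auto simp: AA_def)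
    have "a \<noteq> 1" using a e1 by auto
    then obtain b where "b \<ge> 1" "stern_e a = stern_e b + 1" "a = 2*b \<or> a = 4*b+1 \<or> a = 4*b-1"
      using e_pos[of a] a by auto
    then show "a \<in> (\<lambda>a. 2*a)`AA n \<union> (\<lambda>a. 4*a-1)`AA n \<union> (\<lambda>a. 4*a+1)`AA n"
      using a by (auto simp: AA_def)
  qed
  show "(\<lambda>a. 2*a)`AA n \<union> (\<lambda>a. 4*a-1)`AA n \<union> (\<lambda>a. 4*a+1)`AA n \<subseteq> AA (Suc n)"
    using e_even e_4p1 e_4m1 by (auto simp: AA_def)
qed

lemma AA_fin: "finite (AA n)"
  by (induction n) (auto simp: AA0 AA_Suc)

lemma sumA:
  fixes f :: "nat \<Rightarrow> real"
  shows "(\<Sum>a\<in>AA (Suc n). f a) = (\<Sum>a\<in>AA n. f (2*a) + f (4*a-1) + f (4*a+1))"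
proof -
  have pos: "\<And>a. a \<in> AA n \<Longrightarrow> a \<ge> 1" by (auto simp: AA_def)
  have i1: "inj_on (\<lambda>a::nat. 2*a) (AA n)" by (auto simp: inj_on_def)
  have i2: "inj_on (\<lambda>a::nat. 4*a-1) (AA n)" using pos by (auto simp: inj_on_def)
  have i3: "inj_on (\<lambda>a::nat. 4*a+1) (AA n)" by (auto simp: inj_on_def)
  have d1: "(\<lambda>a. 2*a)`AA n \<inter> (\<lambda>a. 4*a-1)`AA n = {}"
    using pos ne1 by fastforce
  have d2: "((\<lambda>a. 2*a)`AA n \<union> (\<lambda>a. 4*a-1)`AA n) \<inter> (\<lambda>a. 4*a+1)`AA n = {}"
    by (auto simp: image_iff AA_def) presburger+
  have "(\<Sum>a\<in>AA (Suc n). f a) = (\<Sum>a\<in>(\<lambda>a. 2*a)`AA n. f a) + (\<Sum>a\<in>(\<lambda>a. 4*a-1)`AA n. f a)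
       + (\<Sum>a\<in>(\<lambda>a. 4*a+1)`AA n. f a)"
    unfolding AA_Suc using d1 d2 AA_fin
    by (simp add: sum.union_disjoint)
  also have "\<dots> = (\<Sum>a\<in>AA n. f (2*a)) + (\<Sum>a\<in>AA n. f (4*a-1)) + (\<Sum>a\<in>AA n. f (4*a+1))"
    using i1 i2 i3 by (simp add: sum.reindex)
  finally show ?thesis by (simp add: sum.distrib)
qed


definition TT :: "nat \<Rightarrow> nat \<Rightarrow> real" where "TT k n = (\<Sum>a\<in>AA n. real a ^ k)"

lemma S_TT: "real (stern_S k n) = TT k n"
  unfolding stern_S_def TT_def AA_def by simp

lemma sumA':
  fixes f :: "real \<Rightarrow> real"
  shows "(\<Sum>a\<in>AA (Suc n). f (real a)) = (\<Sum>a\<in>AA n. f (2*real a) + f (4*real a - 1) + f (4*real a+1))"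
  unfolding sumA[of "\<lambda>a. f (real a)"]
  by (rule sum.cong) (auto simp: AA_def of_nat_diff add.commute)

lemma TT_rec0: "TT 0 (Suc n) = 3 * TT 0 n"
proof -
  have "TT 0 (Suc n) = (\<Sum>a\<in>AA n. (2*real a)^0 + (4*real a - 1)^0 + (4*real a+1)^0)"
    unfolding TT_def by (rule sumA'[of "\<lambda>x. x^0"])
  then show ?thesis by (simp add: TT_def sum_distrib_left)
qed
lemma TT_rec1: "TT 1 (Suc n) = 10 * TT 1 n"
proof -
  have "TT 1 (Suc n) = (\<Sum>a\<in>AA n. (2*real a)^1 + (4*real a - 1)^1 + (4*real a+1)^1)"
    unfolding TT_def by (rule sumA'[of "\<lambda>x. x^1"])
  also have "\<dots> = (\<Sum>a\<in>AA n. 10 * real a ^ 1)" by (rule sum.cong) (simp_all add: algebra_simps)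
  finally show ?thesis by (simp add: TT_def sum_distrib_left)
qed
lemma TT_rec2: "TT 2 (Suc n) = 36 * TT 2 n + 2 * TT 0 n"
proof -
  have "TT 2 (Suc n) = (\<Sum>a\<in>AA n. (2*real a)^2 + (4*real a - 1)^2 + (4*real a+1)^2)"
    unfolding TT_def by (rule sumA'[of "\<lambda>x. x^2"])
  also have "\<dots> = (\<Sum>a\<in>AA n. 36 * real a ^ 2 + 2 * real a ^ 0)" by (rule sum.cong) (simp_all add: algebra_simps power2_eq_square)
  finally show ?thesis by (simp add: TT_def sum_distrib_left sum.distrib)
qed
lemma TT_rec3: "TT 3 (Suc n) = 136 * TT 3 n + 24 * TT 1 n"
proof -
  have "TT 3 (Suc n) = (\<Sum>a\<in>AA n. (2*real a)^3 + (4*real a - 1)^3 + (4*real a+1)^3)"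
    unfolding TT_def by (rule sumA'[of "\<lambda>x. x^3"])
  also have "\<dots> = (\<Sum>a\<in>AA n. 136 * real a ^ 3 + 24 * real a ^ 1)" by (rule sum.cong) (simp_all add: algebra_simps power3_eq_cube)
  finally show ?thesis by (simp only: TT_def sum_distrib_left sum.distrib)
qed

lemma TTbase: "TT k 0 = 1" by (simp add: TT_def AA0)

lemma TT0: "TT 0 n = 3 ^ n"
  by (induction n) (simp add: TTbase, simp only: TT_rec0 power_Suc)
lemma TT1: "TT 1 n = 10 ^ n"
  by (induction n) (simp add: TTbase, simp only: TT_rec1 power_Suc)
lemma TT2: "TT 2 n = (35 * 36 ^ n - 2 * 3 ^ n) / 33"
proof (induction n)
  case 0 then show ?case by (simp add: TTbase)
next
  case (Suc n) then show ?case by (simp only: TT_rec2 TT0) (simp add: field_simps)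
qed
lemma TT3: "TT 3 n = (25 * 136 ^ n - 4 * 10 ^ n) / 21"
proof (induction n)
  case 0 then show ?case by (simp add: TTbase)
next
  case (Suc n) then show ?case by (simp only: TT_rec3 TT1) (simp add: field_simps)
qed

theorem mainTheorem11:
  fixes n :: nat
  shows "real (stern_S 1 n) = 10 ^ n \<and>
         real (stern_S 2 n) = (35 * 36 ^ n - 2 * 3 ^ n) / 33 \<and>
         real (stern_S 3 n) = (25 * 136 ^ n - 4 * 10 ^ n) / 21"
  by (simp only: S_TT TT1 TT2 TT3)

end
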